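(* Let $K$ be a field of characteristic $p>0$, $(A,\circ)$ an associative commutative $K$-algebra and $D$ a derivation of $(A,\circ)$. For integers $0\le k\le l$ define a multiplication $\square=\square_{k,l}$ on $A$ by $$a\square b=D\big(D^{p^k-1}(a)\circ D^{p^l-1}(b)+D^{p^l-1}(a)\circ D^{p^k-1}(b)\big)\ \text{ if }k\neq l,\qquad a\square b=D\big(D^{p^k-1}(a)\circ D^{p^k-1}(b)\big)\ \text{ if }k=l.$$ (i) If $k=l$, or if $p=2$ and $l=k+1$, then $(A,\square)$ is Tortken. (ii) If $k\neq l$ and $p>2$, or if $p=2$ and $l-k>1$, then there exist an associative commutative algebra $(A,\circ)$ with a derivation $D$ such that $(A,\square)$ is not Tortken.
   Context: An algebra with multiplication $\star$ is Tortken if $(a\star b)\star(c\star d)-(a\star d)\star(c\star b)=(a,b,c)\star d-(a,d,c)\star b$ for all $a,b,c,d$, where $(a,b,c)=a\star(b\star c)-(a\star b)\star c$. $D^0$ is the identity map. *)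

theory Defs
  imports Main
begin

record ('k, 'a) kalg =
  carr :: "'a set"
  add  :: "'a \<Rightarrow> 'a \<Rightarrow> 'a"
  zer  :: "'a"
  neg  :: "'a \<Rightarrow> 'a"
  mul  :: "'a \<Rightarrow> 'a \<Rightarrow> 'a"
  smul :: "'k \<Rightarrow> 'a \<Rightarrow> 'a"

definition comm_assoc_kalg :: "('k::field, 'a) kalg \<Rightarrow> bool" where
  "comm_assoc_kalg R \<longleftrightarrow>
     zer R \<in> carr R \<and>
     (\<forall>a\<in>carr R. \<forall>b\<in>carr R. add R a b \<in> carr R \<and> mul R a b \<in> carr R) \<and>
     (\<forall>a\<in>carr R. neg R a \<in> carr R) \<and>
     (\<forall>c. \<forall>a\<in>carr R. smul R c a \<in> carr R) \<and>
     (\<forall>a\<in>carr R. \<forall>b\<in>carr R. \<forall>c\<in>carr R. add R (add R a b) c = add R a (add R b c)) \<and>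
     (\<forall>a\<in>carr R. \<forall>b\<in>carr R. add R a b = add R b a) \<and>
     (\<forall>a\<in>carr R. add R (zer R) a = a) \<and>
     (\<forall>a\<in>carr R. add R (neg R a) a = zer R) \<and>
     (\<forall>a\<in>carr R. smul R 1 a = a) \<and>
     (\<forall>c d. \<forall>a\<in>carr R. smul R (c * d) a = smul R c (smul R d a)) \<and>
     (\<forall>c d. \<forall>a\<in>carr R. smul R (c + d) a = add R (smul R c a) (smul R d a)) \<and>
     (\<forall>c. \<forall>a\<in>carr R. \<forall>b\<in>carr R. smul R c (add R a b) = add R (smul R c a) (smul R c b)) \<and>
     (\<forall>a\<in>carr R. \<forall>b\<in>carr R. \<forall>c\<in>carr R. mul R (mul R a b) c = mul R a (mul R b c)) \<and>
     (\<forall>a\<in>carr R. \<forall>b\<in>carr R. mul R a b = mul R b a) \<and>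
     (\<forall>a\<in>carr R. \<forall>b\<in>carr R. \<forall>c\<in>carr R. mul R a (add R b c) = add R (mul R a b) (mul R a c)) \<and>
     (\<forall>c. \<forall>a\<in>carr R. \<forall>b\<in>carr R. smul R c (mul R a b) = mul R (smul R c a) b \<and>
                                   smul R c (mul R a b) = mul R a (smul R c b))"

definition derivation :: "('k::field, 'a) kalg \<Rightarrow> ('a \<Rightarrow> 'a) \<Rightarrow> bool" where
  "derivation R D \<longleftrightarrow>
     (\<forall>a\<in>carr R. D a \<in> carr R) \<and>
     (\<forall>a\<in>carr R. \<forall>b\<in>carr R. D (add R a b) = add R (D a) (D b)) \<and>
     (\<forall>c. \<forall>a\<in>carr R. D (smul R c a) = smul R c (D a)) \<and>
     (\<forall>a\<in>carr R. \<forall>b\<in>carr R. D (mul R a b) = add R (mul R (D a) b) (mul R a (D b)))"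

definition sub :: "('k, 'a) kalg \<Rightarrow> 'a \<Rightarrow> 'a \<Rightarrow> 'a" where
  "sub R x y = add R x (neg R y)"

definition assoc :: "('k, 'a) kalg \<Rightarrow> ('a \<Rightarrow> 'a \<Rightarrow> 'a) \<Rightarrow> 'a \<Rightarrow> 'a \<Rightarrow> 'a \<Rightarrow> 'a" where
  "assoc R m a b c = sub R (m a (m b c)) (m (m a b) c)"

definition tortken :: "('k, 'a) kalg \<Rightarrow> ('a \<Rightarrow> 'a \<Rightarrow> 'a) \<Rightarrow> bool" where
  "tortken R m \<longleftrightarrow> (\<forall>a\<in>carr R. \<forall>b\<in>carr R. \<forall>c\<in>carr R. \<forall>d\<in>carr R.
      sub R (m (m a b) (m c d)) (m (m a d) (m c b)) =
      sub R (m (assoc R m a b c) d) (m (assoc R m a d c) b))"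

definition box :: "nat \<Rightarrow> nat \<Rightarrow> nat \<Rightarrow> ('k, 'a) kalg \<Rightarrow> ('a \<Rightarrow> 'a) \<Rightarrow> 'a \<Rightarrow> 'a \<Rightarrow> 'a" where
  "box p k l R D a b =
     (if k \<noteq> l then
        D (add R (mul R ((D ^^ (p ^ k - 1)) a) ((D ^^ (p ^ l - 1)) b))
                 (mul R ((D ^^ (p ^ l - 1)) a) ((D ^^ (p ^ k - 1)) b)))
      else D (mul R ((D ^^ (p ^ k - 1)) a) ((D ^^ (p ^ k - 1)) b)))"

end

theory Submission
  imports Defs "HOL-Algebra.Ring" "HOL-Computational_Algebra.Computational_Algebra"
begin


primrec ssum :: "('k, 'a) kalg \<Rightarrow> (nat \<Rightarrow> 'a) \<Rightarrow> nat \<Rightarrow> 'a" where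
  "ssum R f 0 = zer R"
| "ssum R f (Suc n) = kalg.add R (ssum R f n) (f n)"


locale CA =
  fixes R :: "('k::field, 'a) kalg"
  assumes ca: "comm_assoc_kalg R"
begin

abbreviation "C \<equiv> carr R"
abbreviation "pl \<equiv> kalg.add R"
abbreviation "ze \<equiv> zer R"
abbreviation "ng \<equiv> neg R"
abbreviation "ml \<equiv> kalg.mul R"
abbreviation "sm \<equiv> smul R"
abbreviation "sb \<equiv> Defs.sub R"

lemma zero_closed: "ze \<in> C" using ca unfolding comm_assoc_kalg_def by auto
lemma a_closed: "x \<in> C \<Longrightarrow> y \<in> C \<Longrightarrow> pl x y \<in> C" using ca unfolding comm_assoc_kalg_def by auto
lemma m_closed: "x \<in> C \<Longrightarrow> y \<in> C \<Longrightarrow> ml x y \<in> C" using ca unfolding comm_assoc_kalg_def by auto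
lemma a_inv_closed: "x \<in> C \<Longrightarrow> ng x \<in> C" using ca unfolding comm_assoc_kalg_def by auto
lemma s_closed: "x \<in> C \<Longrightarrow> sm c x \<in> C" using ca unfolding comm_assoc_kalg_def by auto
lemma minus_eq: "sb x y = pl x (ng y)" by (simp add: sub_def)
lemma minus_closed: "x \<in> C \<Longrightarrow> y \<in> C \<Longrightarrow> sb x y \<in> C" by (simp add: minus_eq a_closed a_inv_closed)
lemma a_assoc: "x \<in> C \<Longrightarrow> y \<in> C \<Longrightarrow> z \<in> C \<Longrightarrow> pl (pl x y) z = pl x (pl y z)"
  using ca unfolding comm_assoc_kalg_def by auto
lemma a_comm: "x \<in> C \<Longrightarrow> y \<in> C \<Longrightarrow> pl x y = pl y x"
  using ca unfolding comm_assoc_kalg_def by auto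
lemma l_zero: "x \<in> C \<Longrightarrow> pl ze x = x"
  using ca unfolding comm_assoc_kalg_def by auto
lemma l_neg: "x \<in> C \<Longrightarrow> pl (ng x) x = ze"
  using ca unfolding comm_assoc_kalg_def by auto
lemma m_assoc: "x \<in> C \<Longrightarrow> y \<in> C \<Longrightarrow> z \<in> C \<Longrightarrow> ml (ml x y) z = ml x (ml y z)"
  using ca unfolding comm_assoc_kalg_def by auto
lemma m_comm: "x \<in> C \<Longrightarrow> y \<in> C \<Longrightarrow> ml x y = ml y x"
  using ca unfolding comm_assoc_kalg_def by auto
lemma r_distr: "x \<in> C \<Longrightarrow> y \<in> C \<Longrightarrow> z \<in> C \<Longrightarrow> ml z (pl x y) = pl (ml z x) (ml z y)"
  using ca unfolding comm_assoc_kalg_def by auto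
lemma l_distr: "x \<in> C \<Longrightarrow> y \<in> C \<Longrightarrow> z \<in> C \<Longrightarrow> ml (pl x y) z = pl (ml x z) (ml y z)"
  using r_distr m_comm a_closed by metis
lemma s_one: "x \<in> C \<Longrightarrow> sm 1 x = x"
  using ca unfolding comm_assoc_kalg_def by auto
lemma s_mult: "x \<in> C \<Longrightarrow> sm (a * b) x = sm a (sm b x)"
  using ca unfolding comm_assoc_kalg_def by auto
lemma s_ldistr: "x \<in> C \<Longrightarrow> sm (a + b) x = pl (sm a x) (sm b x)"
  using ca unfolding comm_assoc_kalg_def by auto
lemma s_rdistr: "x \<in> C \<Longrightarrow> y \<in> C \<Longrightarrow> sm a (pl x y) = pl (sm a x) (sm a y)"
  using ca unfolding comm_assoc_kalg_def by auto
lemma s_ml1: "x \<in> C \<Longrightarrow> y \<in> C \<Longrightarrow> sm c (ml x y) = ml (sm c x) y"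
  using ca unfolding comm_assoc_kalg_def by blast
lemma s_ml2: "x \<in> C \<Longrightarrow> y \<in> C \<Longrightarrow> sm c (ml x y) = ml x (sm c y)"
  using ca unfolding comm_assoc_kalg_def by blast

lemma a_lcomm: "x \<in> C \<Longrightarrow> y \<in> C \<Longrightarrow> z \<in> C \<Longrightarrow> pl x (pl y z) = pl y (pl x z)"
  by (metis a_assoc a_comm)
lemma m_lcomm: "x \<in> C \<Longrightarrow> y \<in> C \<Longrightarrow> z \<in> C \<Longrightarrow> ml x (ml y z) = ml y (ml x z)"
  by (metis m_assoc m_comm)
lemma r_zero: "x \<in> C \<Longrightarrow> pl x ze = x" by (metis a_comm l_zero zero_closed)
lemma r_neg: "x \<in> C \<Longrightarrow> pl x (ng x) = ze" by (metis a_comm l_neg a_inv_closed)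
lemma r_neg1: "x \<in> C \<Longrightarrow> y \<in> C \<Longrightarrow> pl (ng x) (pl x y) = y"
  by (metis a_assoc l_neg l_zero a_inv_closed)
lemma r_neg2: "x \<in> C \<Longrightarrow> y \<in> C \<Longrightarrow> pl x (pl (ng x) y) = y"
  by (metis a_assoc r_neg l_zero a_inv_closed)
lemma add_cancel: "x \<in> C \<Longrightarrow> y \<in> C \<Longrightarrow> z \<in> C \<Longrightarrow> pl x y = pl x z \<Longrightarrow> y = z"
  by (metis r_neg1)
lemma minus_unique: "x \<in> C \<Longrightarrow> y \<in> C \<Longrightarrow> pl x y = ze \<Longrightarrow> y = ng x"
  by (metis r_neg add_cancel a_inv_closed)
lemma minus_minus: "x \<in> C \<Longrightarrow> ng (ng x) = x"
  by (metis l_neg minus_unique a_inv_closed)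
lemma minus_zero: "ng ze = ze"
  by (metis l_zero minus_unique zero_closed)
lemma minus_add: "x \<in> C \<Longrightarrow> y \<in> C \<Longrightarrow> ng (pl x y) = pl (ng x) (ng y)"
proof -
  assume x: "x \<in> C" and y: "y \<in> C"
  have "pl (pl x y) (pl (ng x) (ng y)) = ze"
    by (metis x y a_assoc a_lcomm r_neg a_inv_closed a_closed r_zero)
  then show ?thesis by (metis minus_unique x y a_closed a_inv_closed)
qed
lemma r_null: "x \<in> C \<Longrightarrow> ml x ze = ze"
proof -
  assume x: "x \<in> C"
  have "pl (ml x ze) (ml x ze) = pl (ml x ze) ze"
    by (metis x r_distr zero_closed l_zero r_zero m_closed)
  then show ?thesis by (metis add_cancel x m_closed zero_closed)
qed
lemma l_null: "x \<in> C \<Longrightarrow> ml ze x = ze" by (metis r_null m_comm zero_closed)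
lemma r_minus: "x \<in> C \<Longrightarrow> y \<in> C \<Longrightarrow> ml x (ng y) = ng (ml x y)"
  by (metis minus_unique r_distr r_neg r_null m_closed a_inv_closed)
lemma l_minus: "x \<in> C \<Longrightarrow> y \<in> C \<Longrightarrow> ml (ng x) y = ng (ml x y)"
  by (metis r_minus m_comm a_inv_closed)

lemmas ca_simprules
  [algebra add: cring "zer R" "kalg.add R" "neg R" "Defs.sub R" "zer R" "kalg.mul R"] =
  a_closed zero_closed a_inv_closed minus_closed m_closed
  a_assoc l_zero l_neg a_comm m_assoc l_distr m_comm minus_eq
  r_zero r_neg r_neg2 r_neg1 minus_add minus_minus minus_zero
  a_lcomm m_lcomm r_distr l_null r_null l_minus r_minus


lemma hom_zero:
  assumes Hc: "\<forall>a\<in>C. H a \<in> C" and Ha: "\<forall>a\<in>C. \<forall>b\<in>C. H (pl a b) = pl (H a) (H b)"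
  shows "H ze = ze"
proof -
  have "pl (H ze) (H ze) = pl (H ze) ze"
    using Ha Hc zero_closed l_zero r_zero by metis
  then show ?thesis using add_cancel Hc zero_closed by metis
qed

lemma hom_neg:
  assumes Hc: "\<forall>a\<in>C. H a \<in> C" and Ha: "\<forall>a\<in>C. \<forall>b\<in>C. H (pl a b) = pl (H a) (H b)"
    and a: "a \<in> C"
  shows "H (ng a) = ng (H a)"
proof -
  have "pl (H a) (H (ng a)) = ze"
    using Ha Hc a hom_zero[OF Hc Ha] r_neg a_inv_closed by metis
  then show ?thesis using minus_unique Hc a a_inv_closed by metis
qed

lemma hom_sub:
  assumes Hc: "\<forall>a\<in>C. H a \<in> C" and Ha: "\<forall>a\<in>C. \<forall>b\<in>C. H (pl a b) = pl (H a) (H b)"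
    and a: "a \<in> C" and b: "b \<in> C"
  shows "H (sb a b) = sb (H a) (H b)"
  using hom_neg[OF Hc Ha b] Ha a b a_inv_closed by (simp add: minus_eq)

lemma tortken_gen:
  assumes Fc: "\<forall>a\<in>C. F a \<in> C" and Ec: "\<forall>a\<in>C. E a \<in> C" and Gc: "\<forall>a\<in>C. G a \<in> C"
    and Fa: "\<forall>a\<in>C. \<forall>b\<in>C. F (pl a b) = pl (F a) (F b)"
    and Ea: "\<forall>a\<in>C. \<forall>b\<in>C. E (pl a b) = pl (E a) (E b)"
    and Ga: "\<forall>a\<in>C. \<forall>b\<in>C. G (pl a b) = pl (G a) (G b)"
    and GL: "\<forall>a\<in>C. \<forall>b\<in>C. G (ml a b) = pl (ml (G a) b) (ml a (G b))"
    and EF: "\<forall>a\<in>C. E (F a) = G a"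
    and mdef: "\<forall>a\<in>C. \<forall>b\<in>C. m a b = F (ml (E a) (E b))"
  shows "tortken R m"
  unfolding tortken_def
proof (intro ballI)
  fix a b c d assume a: "a \<in> C" and b: "b \<in> C" and c: "c \<in> C" and d: "d \<in> C"
  have mC: "m u v \<in> C" if "u \<in> C" "v \<in> C" for u v
    using that mdef Fc Ec m_closed by simp
  have Em: "E (m u v) = pl (ml (G (E u)) (E v)) (ml (E u) (G (E v)))" if "u \<in> C" "v \<in> C" for u v
    using that mdef EF GL Ec m_closed by simp
  have Gpl: "G (pl u v) = pl (G u) (G v)" if "u \<in> C" "v \<in> C" for u v using that Ga by simp
  have Gml: "G (ml u v) = pl (ml (G u) v) (ml u (G v))" if "u \<in> C" "v \<in> C" for u v using that GL by simp
  have Fsb: "sb (F u) (F v) = F (sb u v)" if "u \<in> C" "v \<in> C" for u v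
    using hom_sub[OF Fc Fa that] by simp
  have Esb: "E (sb u v) = sb (E u) (E v)" if "u \<in> C" "v \<in> C" for u v
    using hom_sub[OF Ec Ea that] by simp
  have EC: "u \<in> C \<Longrightarrow> E u \<in> C" for u using Ec by simp
  have GC: "u \<in> C \<Longrightarrow> G u \<in> C" for u using Gc by simp
  have mm: "m u v = F (ml (E u) (E v))" if "u \<in> C" "v \<in> C" for u v using that mdef by simp
  have asC: "assoc R m u v w \<in> C" if "u \<in> C" "v \<in> C" "w \<in> C" for u v w
    using that by (simp add: assoc_def mC minus_closed)
  define x y z t where "x = E a" and "y = E b" and "z = E c" and "t = E d"
  have xyzt: "x \<in> C" "y \<in> C" "z \<in> C" "t \<in> C" using x_def y_def z_def t_def a b c d EC by auto
  have GG: "G x \<in> C" "G y \<in> C" "G z \<in> C" "G t \<in> C" "G (G x) \<in> C" "G (G y) \<in> C" "G (G z) \<in> C" "G (G t) \<in> C"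
    using xyzt GC by auto
  have L: "sb (m (m a b) (m c d)) (m (m a d) (m c b)) =
     F (sb (ml (E (m a b)) (E (m c d))) (ml (E (m a d)) (E (m c b))))"
    using Fsb[OF m_closed[OF EC[OF mC[OF a b]] EC[OF mC[OF c d]]] m_closed[OF EC[OF mC[OF a d]] EC[OF mC[OF c b]]]]
      mm[OF mC[OF a b] mC[OF c d]] mm[OF mC[OF a d] mC[OF c b]] by simp
  have Rr: "sb (m (assoc R m a b c) d) (m (assoc R m a d c) b) =
     F (sb (ml (E (assoc R m a b c)) (E d)) (ml (E (assoc R m a d c)) (E b)))"
    using Fsb[OF m_closed[OF EC[OF asC[OF a b c]] EC[OF d]] m_closed[OF EC[OF asC[OF a d c]] EC[OF b]]]
      mm[OF asC[OF a b c] d] mm[OF asC[OF a d c] b] by simp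
  have E1: "E (assoc R m u v w) = sb (E (m u (m v w))) (E (m (m u v) w))" if "u \<in> C" "v \<in> C" "w \<in> C" for u v w
    using that by (simp add: assoc_def Esb mC)
  have inner: "sb (ml (E (m a b)) (E (m c d))) (ml (E (m a d)) (E (m c b))) =
     sb (ml (E (assoc R m a b c)) (E d)) (ml (E (assoc R m a d c)) (E b))"
    using a b c d xyzt GG
    apply (simp add: E1 Em mC m_closed a_closed GC EC Gpl Gml flip: x_def y_def z_def t_def)
    apply (insert GG)
    apply algebra
    done
  show "sb (m (m a b) (m c d)) (m (m a d) (m c b)) =
        sb (m (assoc R m a b c) d) (m (assoc R m a d c) b)"
    using L Rr inner by simp
qed


lemma ac4: "a \<in> C \<Longrightarrow> b \<in> C \<Longrightarrow> c \<in> C \<Longrightarrow> d \<in> C \<Longrightarrow>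
  pl (pl a b) (pl c d) = pl (pl a c) (pl b d)"
  by algebra

lemma s_zero: "x \<in> C \<Longrightarrow> sm 0 x = ze"
proof -
  assume x: "x \<in> C"
  have "pl (sm 0 x) (sm 0 x) = pl (sm 0 x) ze"
    using s_ldistr[OF x, of 0 0] r_zero s_closed x by simp
  then show ?thesis using add_cancel s_closed x zero_closed by metis
qed

lemma ssum_closed: "(\<And>i. i < n \<Longrightarrow> f i \<in> C) \<Longrightarrow> ssum R f n \<in> C"
  by (induction n) (auto simp: zero_closed a_closed)

lemma ssum_cong: "(\<And>i. i < n \<Longrightarrow> f i = g i) \<Longrightarrow> ssum R f n = ssum R g n"
  by (induction n) auto

lemma ssum_add:
  "(\<And>i. i < n \<Longrightarrow> f i \<in> C) \<Longrightarrow> (\<And>i. i < n \<Longrightarrow> g i \<in> C) \<Longrightarrow>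
   ssum R (\<lambda>i. pl (f i) (g i)) n = pl (ssum R f n) (ssum R g n)"
proof (induction n)
  case 0 then show ?case by (simp add: l_zero zero_closed)
next
  case (Suc n)
  have fc: "ssum R f n \<in> C" "ssum R g n \<in> C" "f n \<in> C" "g n \<in> C"
    using Suc.prems by (auto intro!: ssum_closed)
  show ?case using Suc fc by (simp add: ac4)
qed

lemma ssum_shift:
  "(\<And>i. i < Suc n \<Longrightarrow> f i \<in> C) \<Longrightarrow> ssum R f (Suc n) = pl (f 0) (ssum R (\<lambda>i. f (Suc i)) n)"
proof (induction n)
  case 0 then show ?case by (simp add: l_zero r_zero zero_closed)
next
  case (Suc n)
  have fc: "ssum R (\<lambda>i. f (Suc i)) n \<in> C" "f 0 \<in> C" "f (Suc n) \<in> C"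
    using Suc.prems by (auto intro!: ssum_closed)
  have "ssum R f (Suc (Suc n)) = pl (ssum R f (Suc n)) (f (Suc n))" by simp
  also have "\<dots> = pl (pl (f 0) (ssum R (\<lambda>i. f (Suc i)) n)) (f (Suc n))" using Suc by simp
  finally show ?case using fc by (simp add: a_assoc)
qed

lemma ssum_hom:
  assumes Hc: "\<forall>a\<in>C. H a \<in> C" and Ha: "\<forall>a\<in>C. \<forall>b\<in>C. H (pl a b) = pl (H a) (H b)"
  shows "(\<And>i. i < n \<Longrightarrow> f i \<in> C) \<Longrightarrow> H (ssum R f n) = ssum R (\<lambda>i. H (f i)) n"
proof (induction n)
  case 0 then show ?case using hom_zero[OF Hc Ha] by simp
next
  case (Suc n)
  then show ?case using Ha ssum_closed by simp
qed

lemma ssum_single: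
  "1 \<le> n \<Longrightarrow> (\<And>i. i < n \<Longrightarrow> f i \<in> C) \<Longrightarrow> (\<And>i. 0 < i \<Longrightarrow> i < n \<Longrightarrow> f i = ze) \<Longrightarrow> ssum R f n = f 0"
proof (induction n)
  case 0 then show ?case by simp
next
  case (Suc n)
  show ?case
  proof (cases "n = 0")
    case True then show ?thesis using Suc.prems by (simp add: l_zero)
  next
    case False
    then have "ssum R f n = f 0" using Suc by simp
    then show ?thesis using Suc.prems False by (simp add: r_zero)
  qed
qed

lemma der_pow:
  assumes "derivation R \<delta>"
  shows "(\<forall>a\<in>C. (\<delta>^^n) a \<in> C) \<and> (\<forall>a\<in>C. \<forall>b\<in>C. (\<delta>^^n) (pl a b) = pl ((\<delta>^^n) a) ((\<delta>^^n) b))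
     \<and> (\<forall>c. \<forall>a\<in>C. (\<delta>^^n) (sm c a) = sm c ((\<delta>^^n) a))"
  using assms unfolding derivation_def
  by (induction n) (auto)

lemma leibniz:
  assumes d: "derivation R \<delta>" and x: "x \<in> C" and y: "y \<in> C"
  shows "(\<delta>^^m) (ml x y) = ssum R (\<lambda>i. sm (of_nat (m choose i)) (ml ((\<delta>^^i) x) ((\<delta>^^(m-i)) y))) (Suc m)"
proof (induction m)
  case 0
  then show ?case using x y by (simp add: l_zero s_one m_closed)
next
  case (Suc m)
  have dc: "\<And>a n. a \<in> C \<Longrightarrow> (\<delta>^^n) a \<in> C" using der_pow[OF d] by blast
  have dC: "\<And>a. a \<in> C \<Longrightarrow> \<delta> a \<in> C" and dA: "\<And>a b. a \<in> C \<Longrightarrow> b \<in> C \<Longrightarrow> \<delta> (pl a b) = pl (\<delta> a) (\<delta> b)"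
    and dS: "\<And>a c. a \<in> C \<Longrightarrow> \<delta> (sm c a) = sm c (\<delta> a)"
    and dL: "\<And>a b. a \<in> C \<Longrightarrow> b \<in> C \<Longrightarrow> \<delta> (ml a b) = pl (ml (\<delta> a) b) (ml a (\<delta> b))"
    using d unfolding derivation_def by auto
  define X where "X i = (\<delta>^^i) x" for i
  define Y where "Y i = (\<delta>^^i) y" for i
  have XC: "X i \<in> C" and YC: "Y i \<in> C" for i using dc x y X_def Y_def by auto
  have dX: "\<delta> (X i) = X (Suc i)" and dY: "\<delta> (Y i) = Y (Suc i)" for i
    by (simp_all add: X_def Y_def)
  define A where "A i = sm (of_nat (m choose i)) (ml (X (Suc i)) (Y (m - i)))" for i
  define B where "B i = sm (of_nat (m choose i)) (ml (X i) (Y (Suc (m - i))))" for i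
  define B' where "B' i = sm (of_nat (m choose Suc i)) (ml (X (Suc i)) (Y (m - i)))" for i
  define T where "T i = sm (of_nat (Suc m choose i)) (ml (X i) (Y (Suc m - i)))" for i
  have AC: "A i \<in> C" and BC: "B i \<in> C" and B'C: "B' i \<in> C" and TC: "T i \<in> C" for i
    unfolding A_def B_def B'_def T_def using XC YC by (auto intro: s_closed m_closed)
  have IH: "(\<delta>^^m) (ml x y) = ssum R (\<lambda>i. sm (of_nat (m choose i)) (ml (X i) (Y (m - i)))) (Suc m)"
    using Suc.IH by (simp add: X_def Y_def)
  have "(\<delta>^^Suc m) (ml x y) = \<delta> ((\<delta>^^m) (ml x y))" by simp
  also have "\<dots> = ssum R (\<lambda>i. \<delta> (sm (of_nat (m choose i)) (ml (X i) (Y (m - i))))) (Suc m)"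
    unfolding IH by (rule ssum_hom) (use dC dA XC YC in \<open>auto intro!: s_closed m_closed\<close>)
  also have "\<dots> = ssum R (\<lambda>i. pl (A i) (B i)) (Suc m)"
  proof (rule ssum_cong)
    fix i assume "i < Suc m"
    then have "Suc (m - i) = Suc m - i" by simp
    then show "\<delta> (sm (of_nat (m choose i)) (ml (X i) (Y (m - i)))) = pl (A i) (B i)"
      unfolding A_def B_def using XC YC
      by (simp add: dS dL dX dY m_closed s_rdistr a_closed)
  qed
  also have "\<dots> = pl (ssum R A (Suc m)) (ssum R B (Suc m))"
    by (rule ssum_add) (auto simp: AC BC)
  finally have lhs: "(\<delta>^^Suc m) (ml x y) = pl (ssum R A (Suc m)) (ssum R B (Suc m))" .
  have B0: "B 0 = T 0" by (simp add: B_def T_def)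
  have BS: "B (Suc i) = B' i" if "i < Suc m" for i
  proof (cases "i = m")
    case True then show ?thesis by (simp add: B_def B'_def s_zero m_closed XC YC binomial_eq_0)
  next
    case False
    then have "Suc (m - Suc i) = m - i" using that by simp
    then show ?thesis by (simp add: B_def B'_def)
  qed
  have TS: "T (Suc i) = pl (A i) (B' i)" if "i < Suc m" for i
  proof -
    have "Suc m - Suc i = m - i" by simp
    then show ?thesis
      by (simp add: T_def A_def B'_def s_ldistr m_closed XC YC)
  qed
  have sB: "ssum R B (Suc m) = pl (T 0) (ssum R B' m)"
  proof -
    have "ssum R B (Suc m) = pl (B 0) (ssum R (\<lambda>i. B (Suc i)) m)"
      by (rule ssum_shift) (simp add: BC)
    also have "ssum R (\<lambda>i. B (Suc i)) m = ssum R B' m"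
      by (rule ssum_cong) (simp add: BS)
    finally show ?thesis using B0 by simp
  qed
  have B'm: "B' m = ze" by (simp add: B'_def s_zero m_closed XC YC binomial_eq_0)
  have sT: "ssum R T (Suc (Suc m)) = pl (T 0) (pl (ssum R A (Suc m)) (ssum R B' (Suc m)))"
  proof -
    have "ssum R T (Suc (Suc m)) = pl (T 0) (ssum R (\<lambda>i. T (Suc i)) (Suc m))"
      by (rule ssum_shift) (simp add: TC)
    also have "ssum R (\<lambda>i. T (Suc i)) (Suc m) = ssum R (\<lambda>i. pl (A i) (B' i)) (Suc m)"
      by (rule ssum_cong) (simp add: TS)
    also have "\<dots> = pl (ssum R A (Suc m)) (ssum R B' (Suc m))"
      by (rule ssum_add) (auto simp: AC B'C)
    finally show ?thesis .
  qed
  have c1: "ssum R A (Suc m) \<in> C" "ssum R B' m \<in> C" "T 0 \<in> C"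
    by (rule ssum_closed, rule AC) (rule ssum_closed, rule B'C, rule TC)
  have "(\<delta>^^Suc m) (ml x y) = ssum R T (Suc (Suc m))"
    unfolding lhs sB sT using c1 B'm by (simp add: r_zero zero_closed a_lcomm)
  moreover have Teq: "T = (\<lambda>i. sm (of_nat (Suc m choose i)) (ml ((\<delta>^^i) x) ((\<delta>^^(Suc m - i)) y)))"
    by (simp add: fun_eq_iff T_def X_def Y_def)
  ultimately show ?case by (simp only:)
qed

end



context CA begin

lemma der_pow_prime:
  assumes d: "derivation R \<delta>" and pr: "prime p" and ch: "CHAR('k) = p"
  shows "derivation R (\<delta>^^p)"
proof -
  have dp: "(\<forall>a\<in>C. (\<delta>^^p) a \<in> C) \<and> (\<forall>a\<in>C. \<forall>b\<in>C. (\<delta>^^p) (pl a b) = pl ((\<delta>^^p) a) ((\<delta>^^p) b))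
     \<and> (\<forall>c. \<forall>a\<in>C. (\<delta>^^p) (sm c a) = sm c ((\<delta>^^p) a))" by (rule der_pow[OF d])
  have dc: "\<And>a n. a \<in> C \<Longrightarrow> (\<delta>^^n) a \<in> C" using der_pow[OF d] by blast
  have p1: "1 \<le> p" using prime_gt_0_nat[OF pr] by simp
  have L: "(\<delta>^^p) (ml x y) = pl (ml ((\<delta>^^p) x) y) (ml x ((\<delta>^^p) y))" if x: "x \<in> C" and y: "y \<in> C" for x y
  proof -
    define f where "f i = sm (of_nat (p choose i)) (ml ((\<delta>^^i) x) ((\<delta>^^(p-i)) y))" for i
    have fC: "f i \<in> C" for i unfolding f_def using dc x y by (auto intro!: s_closed m_closed)
    have f0: "f i = ze" if "0 < i" "i < p" for i
    proof -
      have "p dvd (p choose i)" by (rule dvd_choose_prime) (use that pr in auto)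
      then have "(of_nat (p choose i) :: 'k) = 0" using ch of_nat_eq_0_iff_char_dvd by metis
      then show ?thesis unfolding f_def using dc x y by (simp add: s_zero m_closed)
    qed
    have "(\<delta>^^p) (ml x y) = ssum R f (Suc p)" unfolding f_def by (rule leibniz[OF d x y])
    also have "\<dots> = pl (ssum R f p) (f p)" by simp
    also have "ssum R f p = f 0" by (rule ssum_single) (use p1 fC f0 in auto)
    finally show ?thesis unfolding f_def using dc x y
      by (simp add: s_one m_closed a_comm)
  qed
  show ?thesis unfolding derivation_def using dp L by blast
qed

lemma der_pow_ppow:
  assumes d: "derivation R \<delta>" and ch: "CHAR('k) = p" and p: "p > 0"
  shows "derivation R (\<delta>^^(p^n))"
proof (induction n)
  case 0 then show ?case using d by simp
next
  case (Suc n)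
  have pr: "prime p" using prime_CHAR_semidom[where 'a='k] ch p by simp
  have "derivation R ((\<delta>^^(p^n))^^p)" by (rule der_pow_prime[OF Suc pr ch])
  then show ?case by (simp add: funpow_mult mult.commute)
qed

lemma part1:
  assumes d: "derivation R D" and ch: "CHAR('k) = p" and p: "p > 0"
    and kl: "k = l \<or> (p = 2 \<and> l = k + 1)"
  shows "tortken R (box p k l R D)"
proof -
  define q where "q = p ^ k"
  have q1: "q \<ge> 1" using p q_def by simp
  have dp: "\<And>n. (\<forall>a\<in>C. (D^^n) a \<in> C) \<and> (\<forall>a\<in>C. \<forall>b\<in>C. (D^^n) (pl a b) = pl ((D^^n) a) ((D^^n) b))"
    using der_pow[OF d] by blast
  have dpp: "\<And>n. derivation R (D^^(p^n))" using der_pow_ppow[OF d ch p] .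
  from kl show ?thesis
  proof
    assume kl: "k = l"
    have G: "derivation R (D^^q)" using dpp q_def by simp
    show ?thesis
    proof (rule tortken_gen[where F = D and E = "D^^(q-1)" and G = "D^^q"])
      show "\<forall>a\<in>C. D a \<in> C" "\<forall>a\<in>C. \<forall>b\<in>C. D (pl a b) = pl (D a) (D b)"
        using d unfolding derivation_def by auto
      show "\<forall>a\<in>C. (D^^(q-1)) a \<in> C" "\<forall>a\<in>C. \<forall>b\<in>C. (D^^(q-1)) (pl a b) = pl ((D^^(q-1)) a) ((D^^(q-1)) b)"
        using dp by auto
      show "\<forall>a\<in>C. (D^^q) a \<in> C" "\<forall>a\<in>C. \<forall>b\<in>C. (D^^q) (pl a b) = pl ((D^^q) a) ((D^^q) b)"
        "\<forall>a\<in>C. \<forall>b\<in>C. (D^^q) (ml a b) = pl (ml ((D^^q) a) b) (ml a ((D^^q) b))"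
        using G unfolding derivation_def by auto
      show "\<forall>a\<in>C. (D^^(q-1)) (D a) = (D^^q) a"
      proof
        fix a
        have "(D^^(q-1)) (D a) = (D^^Suc (q-1)) a" by (simp only: funpow_Suc_right o_apply)
        then show "(D^^(q-1)) (D a) = (D^^q) a" using q1 by simp
      qed
      show "\<forall>a\<in>C. \<forall>b\<in>C. box p k l R D a b = D (ml ((D^^(q-1)) a) ((D^^(q-1)) b))"
        using kl by (simp add: box_def q_def)
    qed
  next
    assume pk: "p = 2 \<and> l = k + 1"
    then have Q: "p ^ l = 2 * q" and kl: "k \<noteq> l" using q_def by auto
    have G: "derivation R (D^^(2*q))" using dpp[of "k+1"] pk q_def by (simp add: mult.commute)
    have Gq: "derivation R (D^^q)" using dpp q_def by simp
    show ?thesis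
    proof (rule tortken_gen[where F = "D^^(q+1)" and E = "D^^(q-1)" and G = "D^^(2*q)"])
      show "\<forall>a\<in>C. (D^^(q+1)) a \<in> C" "\<forall>a\<in>C. \<forall>b\<in>C. (D^^(q+1)) (pl a b) = pl ((D^^(q+1)) a) ((D^^(q+1)) b)"
        by (rule conjunct1[OF dp[of "q+1"]], rule conjunct2[OF dp[of "q+1"]])
      show "\<forall>a\<in>C. (D^^(q-1)) a \<in> C" "\<forall>a\<in>C. \<forall>b\<in>C. (D^^(q-1)) (pl a b) = pl ((D^^(q-1)) a) ((D^^(q-1)) b)"
        by (rule conjunct1[OF dp[of "q-1"]], rule conjunct2[OF dp[of "q-1"]])
      show "\<forall>a\<in>C. (D^^(2*q)) a \<in> C" "\<forall>a\<in>C. \<forall>b\<in>C. (D^^(2*q)) (pl a b) = pl ((D^^(2*q)) a) ((D^^(2*q)) b)"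
        "\<forall>a\<in>C. \<forall>b\<in>C. (D^^(2*q)) (ml a b) = pl (ml ((D^^(2*q)) a) b) (ml a ((D^^(2*q)) b))"
        using G unfolding derivation_def by auto
      show "\<forall>a\<in>C. (D^^(q-1)) ((D^^(q+1)) a) = (D^^(2*q)) a"
      proof
        fix a
        have "(D^^(q-1)) ((D^^(q+1)) a) = (D^^((q-1)+(q+1))) a" by (simp only: funpow_add o_apply)
        moreover have "(q-1)+(q+1) = 2*q" using q1 by simp
        ultimately show "(D^^(q-1)) ((D^^(q+1)) a) = (D^^(2*q)) a" by (simp only:)
      qed
      show "\<forall>a\<in>C. \<forall>b\<in>C. box p k l R D a b = (D^^(q+1)) (ml ((D^^(q-1)) a) ((D^^(q-1)) b))"
      proof (intro ballI)
        fix a b assume a: "a \<in> C" and b: "b \<in> C"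
        define x y where "x = (D^^(q-1)) a" and "y = (D^^(q-1)) b"
        have xy: "x \<in> C" "y \<in> C" using dp a b x_def y_def by auto
        have ex: "(D^^(2*q-1)) a = (D^^q) x" and ey: "(D^^(2*q-1)) b = (D^^q) y"
          unfolding x_def y_def using q1 by (simp_all add: mult_2 flip: funpow_add[THEN fun_cong, unfolded o_apply])
        have Dq: "(D^^q) (ml x y) = pl (ml ((D^^q) x) y) (ml x ((D^^q) y))"
          using Gq xy unfolding derivation_def by auto
        have "(D^^(q+1)) (ml x y) = D ((D^^q) (ml x y))" by simp
        also have "\<dots> = D (pl (ml x ((D^^q) y)) (ml ((D^^q) x) y))"
          using Dq xy dp a_comm m_closed by metis
        finally have "(D^^(q+1)) (ml x y) = D (pl (ml x ((D^^q) y)) (ml ((D^^q) x) y))" .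
        moreover have "box p k l R D a b = D (pl (ml x ((D^^(2*q-1)) b)) (ml ((D^^(2*q-1)) a) y))"
          unfolding box_def x_def y_def using kl Q q_def by simp
        ultimately have "box p k l R D a b = (D^^(q+1)) (ml x y)" by (simp only: ex ey)
        then show "box p k l R D a b = (D^^(q+1)) (ml ((D^^(q-1)) a) ((D^^(q-1)) b))"
          by (simp only: x_def y_def)
      qed
    qed
  qed
qed

end




lemma choose_ppow_zero:
  assumes ch: "CHAR('k::field) = p" and p: "p > 0" and Q: "Q = p ^ l" and i: "0 < i" "i < Q"
  shows "(of_nat (Q choose i) :: 'k) = 0"
proof -
  have pr: "prime CHAR('k)" using prime_CHAR_semidom[where 'a='k] ch p by simp
  have pr2: "prime CHAR('k poly)" using pr by simp
  have e: "([:1, 1:] :: 'k poly) = 1 + [:0, 1:]" by (simp add: one_pCons)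
  have "([:1, 1:] :: 'k poly) ^ Q = 1 ^ Q + [:0, 1:] ^ Q"
    unfolding e by (rule freshmans_dream'[OF pr2]) (simp add: Q ch)
  then have "coeff (([:1, 1:] :: 'k poly) ^ Q) i = coeff (1 + [:0, 1:] ^ Q) i" by simp
  moreover have "coeff (([:1, 1:] :: 'k poly) ^ Q) i = of_nat (Q choose i)"
    using i by (simp add: coeff_linear_poly_power)
  moreover have "coeff ((1::'k poly) + [:0, 1:] ^ Q) i = 0"
  proof -
    have "([:0, 1:] :: 'k poly) ^ Q = monom 1 Q" by (simp add: monom_altdef)
    then show ?thesis using i by simp
  qed
  ultimately show ?thesis by simp
qed

lemma choose_shift:
  assumes ch: "CHAR('k::field) = p" and p: "p > 0" and Q: "Q = p ^ l" and j: "j < Q"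
  shows "(of_nat ((Q + m) choose j) :: 'k) = of_nat (m choose j)"
proof -
  have "(of_nat ((Q + m) choose j) :: 'k) = of_nat (\<Sum>k\<le>j. (Q choose k) * (m choose (j - k)))"
    by (simp add: vandermonde)
  also have "\<dots> = (\<Sum>k\<le>j. of_nat (Q choose k) * of_nat (m choose (j - k)))" by simp
  also have "\<dots> = of_nat (Q choose 0) * of_nat (m choose (j - 0)) +
       (\<Sum>k<j. of_nat (Q choose Suc k) * (of_nat (m choose (j - Suc k)) :: 'k))"
    by (rule sum.atMost_shift)
  also have "(\<Sum>k<j. of_nat (Q choose Suc k) * (of_nat (m choose (j - Suc k)) :: 'k)) = 0"
    by (rule sum.neutral) (use choose_ppow_zero[OF ch p Q] j in auto)
  finally show ?thesis by simp
qed

definition hmul :: "(nat \<Rightarrow> 'k::field) \<Rightarrow> (nat \<Rightarrow> 'k) \<Rightarrow> nat \<Rightarrow> 'k" where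
  "hmul f g n = (\<Sum>i\<le>n. of_nat (n choose i) * f i * g (n - i))"

definition DH :: "(nat \<Rightarrow> 'k) \<Rightarrow> nat \<Rightarrow> 'k" where
  "DH f n = f (Suc n)"

lemma hmul_comm: "hmul f g = hmul g f"
proof (rule ext)
  fix n
  have "hmul f g n = (\<Sum>i\<in>{0..n}. of_nat (n choose i) * f i * g (n - i))"
    by (simp add: hmul_def atLeast0AtMost)
  also have "\<dots> = (\<Sum>i\<in>{0..n}. of_nat (n choose (n + 0 - i)) * f (n + 0 - i) * g (n - (n + 0 - i)))"
    by (rule sum.atLeastAtMost_rev)
  also have "\<dots> = (\<Sum>i\<in>{0..n}. of_nat (n choose i) * g i * f (n - i))"
    by (rule sum.cong) (auto simp: binomial_symmetric[symmetric] mult_ac)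
  finally show "hmul f g n = hmul g f n" by (simp add: hmul_def atLeast0AtMost)
qed

lemma hmul_assoc:
  fixes f g h :: "nat \<Rightarrow> 'k::field"
  shows "hmul (hmul f g) h = hmul f (hmul g h)"
proof (rule ext)
  fix n
  define G where "G j t = of_nat (n choose (j + t)) * of_nat ((j + t) choose j) * f j * g t * h (n - (j + t))" for j t
  have "hmul (hmul f g) h n = (\<Sum>k\<le>n. \<Sum>j\<le>k. of_nat (n choose k) * (of_nat (k choose j) * f j * g (k - j)) * h (n - k))"
    by (simp add: hmul_def sum_distrib_left sum_distrib_right)
  also have "\<dots> = (\<Sum>k\<le>n. \<Sum>j\<le>k. G j (k - j))"
    by (rule sum.cong[OF refl], rule sum.cong[OF refl]) (auto simp: G_def mult_ac)
  also have "\<dots> = (\<Sum>(j, t)\<in>{(j, t). j + t \<le> n}. G j t)"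
    by (rule sum.triangle_reindex_eq[symmetric])
  finally have L: "hmul (hmul f g) h n = (\<Sum>(j, t)\<in>{(j, t). j + t \<le> n}. G j t)" .
  have S: "{(j, t). j + t \<le> n} = Sigma {..n} (\<lambda>j. {..n - j})" by auto
  have "hmul f (hmul g h) n = (\<Sum>j\<le>n. \<Sum>t\<le>n - j. of_nat (n choose j) * f j * (of_nat ((n - j) choose t) * g t * h (n - j - t)))"
    by (simp add: hmul_def sum_distrib_left)
  also have "\<dots> = (\<Sum>j\<le>n. \<Sum>t\<le>n - j. G j t)"
  proof (rule sum.cong[OF refl], rule sum.cong[OF refl])
    fix j t assume j: "j \<in> {..n}" and t: "t \<in> {..n - j}"
    have "(n choose (j + t)) * ((j + t) choose j) = (n choose j) * ((n - j) choose ((j + t) - j))"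
      by (rule choose_mult) (use j t in auto)
    then have "(of_nat (n choose (j + t)) :: 'k) * of_nat ((j + t) choose j) = of_nat (n choose j) * of_nat ((n - j) choose t)"
      by (metis add_diff_cancel_left' of_nat_mult)
    then show "of_nat (n choose j) * f j * (of_nat ((n - j) choose t) * g t * h (n - j - t)) = G j t"
      unfolding G_def by (simp add: mult_ac diff_diff_left)
  qed
  also have "\<dots> = (\<Sum>(j, t)\<in>Sigma {..n} (\<lambda>j. {..n - j}). G j t)"
    by (rule sum.Sigma) auto
  finally show "hmul (hmul f g) h n = hmul f (hmul g h) n" using L S by simp
qed

lemma hmul_distr: "hmul f (\<lambda>n. g n + h n) = (\<lambda>n. hmul f g n + hmul f h n)"
  by (simp add: hmul_def fun_eq_iff distrib_left distrib_right sum.distrib)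

lemma hmul_smul1: "(\<lambda>n. c * hmul f g n) = hmul (\<lambda>n. c * f n) g"
  by (simp add: hmul_def fun_eq_iff sum_distrib_left mult_ac)

lemma hmul_smul2: "(\<lambda>n. c * hmul f g n) = hmul f (\<lambda>n. c * g n)"
  by (simp add: hmul_def fun_eq_iff sum_distrib_left mult_ac)

lemma DH_hmul: "DH (hmul f g) = (\<lambda>n. hmul (DH f) g n + hmul f (DH g) n)"
proof (rule ext)
  fix n
  have "DH (hmul f g) n = (\<Sum>i\<le>Suc n. of_nat (Suc n choose i) * f i * g (Suc n - i))"
    by (simp add: DH_def hmul_def)
  also have "\<dots> = f 0 * g (Suc n) + (\<Sum>i\<le>n. of_nat (Suc n choose Suc i) * f (Suc i) * g (Suc n - Suc i))"
    by (subst sum.atMost_Suc_shift) simp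
  also have "\<dots> = f 0 * g (Suc n) + (\<Sum>i\<le>n. of_nat (n choose Suc i) * f (Suc i) * g (n - i))
      + (\<Sum>i\<le>n. of_nat (n choose i) * f (Suc i) * g (n - i))"
    by (simp add: sum.distrib distrib_right)
  finally have A: "DH (hmul f g) n = f 0 * g (Suc n) + (\<Sum>i\<le>n. of_nat (n choose Suc i) * f (Suc i) * g (n - i))
      + hmul (DH f) g n" by (simp add: hmul_def DH_def)
  have "(\<Sum>i\<le>Suc n. of_nat (n choose i) * f i * g (Suc n - i)) =
      f 0 * g (Suc n) + (\<Sum>i\<le>n. of_nat (n choose Suc i) * f (Suc i) * g (n - i))"
    by (subst sum.atMost_Suc_shift) simp
  moreover have "(\<Sum>i\<le>Suc n. of_nat (n choose i) * f i * g (Suc n - i)) = hmul f (DH g) n"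
    by (simp add: hmul_def DH_def Suc_diff_le binomial_eq_0)
  ultimately show "DH (hmul f g) n = hmul (DH f) g n + hmul f (DH g) n" using A by simp
qed

definition HR :: "('k::field, nat \<Rightarrow> 'k) kalg" where
  "HR = \<lparr>carr = UNIV, kalg.add = (\<lambda>f g n. f n + g n), zer = (\<lambda>n. 0), neg = (\<lambda>f n. - f n),
         kalg.mul = hmul, smul = (\<lambda>c f n. c * f n)\<rparr>"

lemma HR_simps [simp]: "carr HR = UNIV" "kalg.add HR = (\<lambda>f g n. f n + g n)" "zer HR = (\<lambda>n. 0)"
  "neg HR = (\<lambda>f n. - f n)" "kalg.mul HR = hmul" "smul HR = (\<lambda>c f n. c * f n)"
  by (simp_all add: HR_def)

lemma HR_ca: "comm_assoc_kalg (HR :: ('k::field, nat \<Rightarrow> 'k) kalg)"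
  unfolding comm_assoc_kalg_def HR_simps
  apply (intro conjI ballI allI)
  apply (auto simp: algebra_simps hmul_assoc hmul_distr intro: hmul_comm hmul_smul1 hmul_smul2)
  done

lemma HR_der: "derivation (HR :: ('k::field, nat \<Rightarrow> 'k) kalg) DH"
  unfolding derivation_def by (simp add: DH_hmul) (simp add: DH_def fun_eq_iff)


definition sc :: "'k::field \<Rightarrow> nat \<Rightarrow> nat \<Rightarrow> 'k" where
  "sc c m n = (if n = m then c else 0)"

lemma sc_add [simp]: "sc a i n + sc b i n = sc (a + b) i n" by (simp add: sc_def)
lemma sc_neg [simp]: "- sc a i n = sc (- a) i n" by (simp add: sc_def)
lemma sc0 [simp]: "sc 0 m = (\<lambda>_. 0)" by (simp add: sc_def fun_eq_iff)
lemma DH_pow: "(DH^^j) f = (\<lambda>n. f (n + j))"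
  by (induction j arbitrary: f) (simp_all add: DH_def fun_eq_iff)
lemma DHpow_sc: "(DH^^j) (sc c m) = (if j \<le> m then sc c (m - j) else (\<lambda>_. 0))"
  by (auto simp: DH_pow sc_def fun_eq_iff)
lemma DHpow_Z [simp]: "(DH^^j) (\<lambda>_. 0) = (\<lambda>_. 0)"
  by (simp add: DH_pow)
lemma DH_Z [simp]: "DH (\<lambda>_. 0) = (\<lambda>_. 0)" by (simp add: DH_def fun_eq_iff)
lemma DH_sc: "DH (sc c m) = (if m = 0 then (\<lambda>_. 0) else sc c (m - 1))"
  by (auto simp: DH_def sc_def fun_eq_iff)
lemma hmul_Z1 [simp]: "hmul (\<lambda>_. 0) f = (\<lambda>_. 0)" by (simp add: hmul_def fun_eq_iff)
lemma hmul_Z2 [simp]: "hmul f (\<lambda>_. 0) = (\<lambda>_. 0)" by (simp add: hmul_def fun_eq_iff)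
lemma hmul_sc: "hmul (sc c i) (sc d j) = sc (c * d * of_nat ((i + j) choose i)) (i + j)"
proof (rule ext)
  fix n
  have "hmul (sc c i) (sc d j) n = (\<Sum>t\<le>n. if t = i then of_nat (n choose i) * c * sc d j (n - i) else 0)"
    unfolding hmul_def by (rule sum.cong) (auto simp: sc_def)
  also have "\<dots> = (if i \<le> n then of_nat (n choose i) * c * sc d j (n - i) else 0)"
    by (simp add: sum.delta')
  also have "\<dots> = sc (c * d * of_nat ((i + j) choose i)) (i + j) n"
    by (auto simp: sc_def)
  finally show "hmul (sc c i) (sc d j) n = sc (c * d * of_nat ((i + j) choose i)) (i + j) n" .
qed

lemma counter:
  fixes q Q :: nat
  assumes q1: "1 \<le> q" and qQ: "2 * q < Q"
    and Cv: "(of_nat ((q + (Q + 1)) choose q) :: 'k::field) = of_nat (q + 1)"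
    and m_def: "m = (\<lambda>a b. DH (\<lambda>n. hmul ((DH^^(q-1)) a) ((DH^^(Q-1)) b) n + hmul ((DH^^(Q-1)) a) ((DH^^(q-1)) b) n))"
  shows "\<not> tortken (HR :: ('k, nat \<Rightarrow> 'k) kalg) m"
proof
  assume T: "tortken (HR :: ('k, nat \<Rightarrow> 'k) kalg) m"
  define a b c d where "a = sc (1::'k) (q - 1)" and "b = sc (1::'k) (Q - 1)"
    and "c = sc (1::'k) (2 * q - 1)" and "d = sc (1::'k) (2 * Q)"
  define C1 where "C1 = (of_nat ((q + (Q + 1)) choose q) :: 'k)"
  have ar: "\<not> (Q - 1 \<le> q - 1)" "q - 1 \<le> Q - 1" "(Q - 1) - (q - 1) = Q - q"
    "q - 1 \<le> 2*q - 1" "(2*q - 1) - (q - 1) = q" "\<not> (Q - 1 \<le> 2*q - 1)"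
    "q - 1 \<le> 2*Q" "2*Q - (q - 1) = 2*Q - q + 1" "Q - 1 \<le> 2*Q" "2*Q - (Q - 1) = Q + 1"
    "q - 1 \<le> Q" "Q - (q - 1) = Q - q + 1" "Q - 1 \<le> Q" "Q - (Q - 1) = 1"
    "Q - 1 \<le> Q + q" "(Q + q) - (Q - 1) = q + 1" "q - 1 \<le> Q + q" "(Q + q) - (q - 1) = Q + 1"
    "q - 1 \<le> q" "q - (q - 1) = 1" "\<not> (Q - 1 \<le> q)" "Q - q \<noteq> 0"
    using q1 qQ by arith+
  have Ea: "(DH^^(q-1)) a = sc 1 0" "(DH^^(Q-1)) a = (\<lambda>_. 0)"
    using q1 qQ ar by (simp_all add: a_def DHpow_sc)
  have Eb: "(DH^^(q-1)) b = sc 1 (Q - q)" "(DH^^(Q-1)) b = sc 1 0"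
    using q1 qQ ar by (simp_all add: b_def DHpow_sc)
  have Ec: "(DH^^(q-1)) c = sc 1 q" "(DH^^(Q-1)) c = (\<lambda>_. 0)"
    using q1 qQ ar by (simp_all add: c_def DHpow_sc)
  have Ed: "(DH^^(q-1)) d = sc 1 (2 * Q - q + 1)" "(DH^^(Q-1)) d = sc 1 (Q + 1)"
    using q1 qQ ar by (simp_all add: d_def DHpow_sc)
  have mZ1: "m (\<lambda>_. 0) x = (\<lambda>_. 0)" and mZ2: "m x (\<lambda>_. 0) = (\<lambda>_. 0)" for x
    by (simp_all add: m_def)
  have ab: "m a b = (\<lambda>_. 0)" using q1 qQ ar Ea Eb Ec Ed by (simp add: m_def hmul_sc DH_sc)
  have cd: "m c d = sc C1 (Q + q)" using q1 qQ ar Ea Eb Ec Ed by (simp add: m_def hmul_sc DH_sc C1_def add_ac)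
  have ad: "m a d = sc 1 Q" using q1 qQ ar Ea Eb Ec Ed by (simp add: m_def hmul_sc DH_sc)
  have cb: "m c b = sc 1 (q - 1)" using q1 qQ ar Ea Eb Ec Ed by (simp add: m_def hmul_sc DH_sc)
  have bc: "m b c = sc 1 (q - 1)" using q1 qQ ar Ea Eb Ec Ed by (simp add: m_def hmul_sc DH_sc)
  have dc: "m d c = sc C1 (Q + q)"
  proof -
    have "(Q + 1 + q) choose (Q + 1) = (q + (Q + 1)) choose q"
      by (metis add.commute add_diff_cancel_right' binomial_symmetric le_add2)
    then show ?thesis using q1 qQ ar Ea Eb Ec Ed by (simp add: m_def hmul_sc DH_sc C1_def add_ac)
  qed
  have L1: "m (m a b) (m c d) = (\<lambda>_. 0)" by (simp add: ab mZ1)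
  have L2: "m (m a d) (m c b) = sc 1 0"
    unfolding ad cb using q1 qQ ar Ea Eb Ec Ed by (simp add: m_def DHpow_sc hmul_sc DH_sc)
  have abc: "assoc HR m a b c = (\<lambda>_. 0)"
    unfolding assoc_def sub_def bc ab mZ1 using q1 qQ ar Ea Eb Ec Ed by (simp add: m_def DHpow_sc hmul_sc DH_sc)
  have X: "assoc HR m a d c = (\<lambda>_. 0)"
  proof -
    have 1: "m a (m d c) = sc C1 q"
      unfolding dc using q1 qQ ar Ea Eb Ec Ed by (simp add: m_def DHpow_sc hmul_sc DH_sc)
    have 2: "m (m a d) c = sc (of_nat (q + 1)) q"
      unfolding ad using q1 qQ ar Ea Eb Ec Ed by (simp add: m_def DHpow_sc hmul_sc DH_sc)
    have C1v: "C1 = of_nat (q + 1)" using Cv C1_def by simp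
    show ?thesis unfolding assoc_def sub_def 1 2 C1v by simp
  qed
  have R1: "m (assoc HR m a b c) d = (\<lambda>_. 0)" by (simp add: abc mZ1)
  have R2: "m (assoc HR m a d c) b = (\<lambda>_. 0)"
    unfolding X by (simp add: mZ1)
  have "Defs.sub HR (m (m a b) (m c d)) (m (m a d) (m c b)) =
        Defs.sub HR (m (assoc HR m a b c) d) (m (assoc HR m a d c) b)"
    using T unfolding tortken_def by simp
  then have "(\<lambda>n. 0 + - sc (1::'k) 0 n) = (\<lambda>n. (0::'k) + - 0)"
    unfolding L1 L2 R1 R2 by (simp add: sub_def)
  then have "0 + - sc (1::'k) 0 0 = 0 + - 0" by metis
  then show False by (simp add: sc_def)
qed

theorem mainTheorem18:
  fixes p k l :: nat
  assumes "CHAR('k::field) = p" and "p > 0" and "k \<le> l"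
  shows "((k = l \<or> (p = 2 \<and> l = k + 1)) \<longrightarrow>
            (\<forall>(R :: ('k, 'a) kalg) D. comm_assoc_kalg R \<longrightarrow> derivation R D \<longrightarrow>
               tortken R (box p k l R D))) \<and>
         (((k \<noteq> l \<and> p > 2) \<or> (p = 2 \<and> l - k > 1)) \<longrightarrow>
            (\<exists>(R :: ('k, nat \<Rightarrow> 'k) kalg) D. comm_assoc_kalg R \<and> derivation R D \<and>
               \<not> tortken R (box p k l R D)))"
proof (intro conjI impI allI)
  fix R :: "('k, 'a) kalg" and D
  assume kl: "k = l \<or> (p = 2 \<and> l = k + 1)" and ca: "comm_assoc_kalg R" and d: "derivation R D"
  show "tortken R (box p k l R D)"
    by (rule CA.part1[OF CA.intro[OF ca] d assms(1) assms(2) kl])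
next
  assume cond: "(k \<noteq> l \<and> p > 2) \<or> (p = 2 \<and> l - k > 1)"
  define q where "q = p ^ k"
  define Q where "Q = p ^ l"
  have q1: "1 \<le> q" using assms(2) q_def by simp
  have kl: "k < l" "k \<noteq> l" using cond assms(3) by auto
  have Qq: "Q = p ^ (l - k) * q" using kl unfolding q_def Q_def by (simp flip: power_add)
  have big: "p ^ (l - k) > 2"
  proof (cases "p > 2")
    case True
    have "p ^ 1 \<le> p ^ (l - k)" using kl assms(2) by (intro power_increasing) auto
    then show ?thesis using True by simp
  next
    case False
    then have p2: "p = 2" and lk: "l - k \<ge> 2" using cond by auto
    have "(2::nat) ^ 2 \<le> 2 ^ (l - k)" using lk by (intro power_increasing) auto
    then show ?thesis using p2 by simp
  qed
  have qQ: "2 * q < Q"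
  proof -
    have "2 * q < p ^ (l - k) * q" using big q1 by simp
    then show ?thesis using Qq by simp
  qed
  have Cv: "(of_nat ((q + (Q + 1)) choose q) :: 'k) = of_nat (q + 1)"
  proof -
    have "(of_nat ((Q + Suc q) choose q) :: 'k) = of_nat (Suc q choose q)"
      by (rule choose_shift[OF assms(1) assms(2) Q_def]) (use qQ in simp)
    moreover have e: "q + (Q + 1) = Q + Suc q" by simp
    ultimately show ?thesis unfolding e by simp
  qed
  have m: "box p k l (HR :: ('k, nat \<Rightarrow> 'k) kalg) DH =
    (\<lambda>a b. DH (\<lambda>n. hmul ((DH^^(q-1)) a) ((DH^^(Q-1)) b) n + hmul ((DH^^(Q-1)) a) ((DH^^(q-1)) b) n))"
    using kl by (simp add: box_def fun_eq_iff q_def Q_def)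
  show "\<exists>(R :: ('k, nat \<Rightarrow> 'k) kalg) D. comm_assoc_kalg R \<and> derivation R D \<and> \<not> tortken R (box p k l R D)"
    using HR_ca HR_der counter[OF q1 qQ Cv m] by blast
qed

end
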